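(* In the setting below, let $\mu$ be a $\sigma$-invariant Borel probability measure on $X$. If $\mu(A_i)=1$ for some $1\le i\le r$, then $(X,\sigma,G,\mu)$ is measure conjugate to $(\overleftarrow{G},\phi,G,\nu)$, where $\overleftarrow{G}$ is the $G$-odometer associated to $(\Gamma_n)_{n\ge1}$, $\phi$ is its action by left multiplication and $\nu$ is its unique invariant (Haar) probability measure.
   Context: Setting: $G$ is a countable residually finite group, $r>1$; $(\Gamma_i)_{i\ge1}$ is a strictly decreasing sequence of finite index normal subgroups of $G$ with $\bigcap_i\Gamma_i=\{1_G\}$, $\Gamma_0=G$; $(D_i)_{i\ge0}$ are finite subsets with $D_0=\{1_G\}$, $D_i$ containing exactly one element of each coset of $\Gamma_i$, $1_G\in D_i\subseteq D_{i+1}$, $G=\bigcup_iD_i$, $D_j=\bigcup_{v\in D_j\cap\Gamma_i}vD_i$ for $j>i\ge1$, and $[G:\Gamma_i],[\Gamma_i:\Gamma_{i+1}]\ge3$. $\Sigma=\{1,\dots,r\}$, $\alpha_m\in\Sigma$ with $\alpha_m\equiv m\pmod r$. $J(0)=\{1_G\}$, $J(m)=D_m\setminus\bigcup_{i<m}J(i)\Gamma_{i+1}$; $\eta(hg)=\alpha_{m+1}$ for $h\in J(m)$, $g\in\Gamma_{m+1}$; $X=\overline{\{\sigma^g\eta\}}$ with $\sigma^gx(h)=x(g^{-1}h)$. $\mathrm{Per}(x,\Gamma,\alpha)=\{g:x(\gamma g)=\alpha\ \forall\gamma\in\Gamma\}$. For $n\ge1$: $C_n=\{x\in X:\mathrm{Per}(x,\Gamma_n,\alpha)=\mathrm{Per}(\eta,\Gamma_n,\alpha)\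 \forall\alpha\}$, $C_{n,i}=\{x\in C_n:x(g)=i\ \forall g\in J(n)\}$. For $1\le i\le r$, $k\ge0$: $Z_{i,k}=\bigcup_{v\in D_{i+kr}}\sigma^{v^{-1}}C_{i+kr,i}$, and $A_i=\bigcap_{g\in G}\bigcup_{k\ge0}\bigcap_{l\ge k}\sigma^g(Z_{i,l})$. The $G$-odometer is $\{(x_n)\in\prod_nG/\Gamma_n: x_{n+1}\mapsto x_n$ under canonical projections$\}$. Measure conjugacy: a bimeasurable bijection between invariant conull subsets intertwining the actions and pushing one measure to the other. *)

theory Defs
  imports "HOL-Probability.Probability"
begin

text \<open>The group G is a countable type with a (not necessarily commutative) group
structure written additively: 0 is the identity, + the group law, - the inverse.\<close>

definition lcoset :: "'g::group_add \<Rightarrow> 'g set \<Rightarrow> 'g set" where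
  "lcoset g H = (\<lambda>h. g + h) ` H"

definition setprod :: "'g::group_add set \<Rightarrow> 'g set \<Rightarrow> 'g set" where
  "setprod A B = {a + b | a b. a \<in> A \<and> b \<in> B}"

definition is_subgroup :: "'g::group_add set \<Rightarrow> bool" where
  "is_subgroup H \<longleftrightarrow> 0 \<in> H \<and> (\<forall>a\<in>H. \<forall>b\<in>H. a + b \<in> H) \<and> (\<forall>a\<in>H. - a \<in> H)"

definition is_normal :: "'g::group_add set \<Rightarrow> bool" where
  "is_normal H \<longleftrightarrow> is_subgroup H \<and> (\<forall>g. \<forall>h\<in>H. g + h + - g \<in> H)"

definition quot :: "'g::group_add set \<Rightarrow> 'g set set" where
  "quot H = {lcoset g H | g. True}"

definition rel_quot :: "'g::group_add set \<Rightarrow> 'g set \<Rightarrow> 'g set set" where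
  "rel_quot K H = {lcoset k H | k. k \<in> K}"

definition toeplitz_setting :: "nat \<Rightarrow> (nat \<Rightarrow> 'g::{group_add,countable} set) \<Rightarrow> (nat \<Rightarrow> 'g set) \<Rightarrow> bool" where
  "toeplitz_setting r \<Gamma> D \<longleftrightarrow>
     r > 1 \<and>
     \<Gamma> 0 = UNIV \<and>
     (\<forall>i\<ge>1. is_normal (\<Gamma> i) \<and> finite (quot (\<Gamma> i))) \<and>
     (\<forall>i. \<Gamma> (Suc i) \<subset> \<Gamma> i) \<and>
     (\<Inter>i. \<Gamma> i) = {0} \<and>
     D 0 = {0} \<and>
     (\<forall>i. finite (D i)) \<and>
     (\<forall>i. \<forall>c\<in>quot (\<Gamma> i). \<exists>!d. d \<in> D i \<and> d \<in> c) \<and>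
     (\<forall>i. D i \<subseteq> \<Union>(quot (\<Gamma> i))) \<and>
     (\<forall>i. 0 \<in> D i \<and> D i \<subseteq> D (Suc i)) \<and>
     (\<Union>i. D i) = UNIV \<and>
     (\<forall>i j. 1 \<le> i \<and> i < j \<longrightarrow> D j = (\<Union>v\<in>D j \<inter> \<Gamma> i. lcoset v (D i))) \<and>
     (\<forall>i\<ge>1. card (quot (\<Gamma> i)) \<ge> 3) \<and>
     (\<forall>i\<ge>1. card (rel_quot (\<Gamma> i) (\<Gamma> (Suc i))) \<ge> 3)"

definition alpha :: "nat \<Rightarrow> nat \<Rightarrow> nat" where
  "alpha r m = (if m mod r = 0 then r else m mod r)"

text \<open>Ucum m = \<Union>_{i<m} J(i) \<Gamma>_{i+1}; J(0) = {1_G}, J(m) = D_m \ Ucum m.\<close>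
primrec Ucum :: "(nat \<Rightarrow> 'g::group_add set) \<Rightarrow> (nat \<Rightarrow> 'g set) \<Rightarrow> nat \<Rightarrow> 'g set" where
  "Ucum \<Gamma> D 0 = {}"
| "Ucum \<Gamma> D (Suc m) = Ucum \<Gamma> D m \<union>
     setprod (if m = 0 then {0} else D m - Ucum \<Gamma> D m) (\<Gamma> (Suc m))"

definition J :: "(nat \<Rightarrow> 'g::group_add set) \<Rightarrow> (nat \<Rightarrow> 'g set) \<Rightarrow> nat \<Rightarrow> 'g set" where
  "J \<Gamma> D m = (if m = 0 then {0} else D m - Ucum \<Gamma> D m)"

text \<open>\<eta>(hg) = \<alpha>_{m+1} for h \<in> J(m), g \<in> \<Gamma>_{m+1}.\<close>
definition eta :: "nat \<Rightarrow> (nat \<Rightarrow> 'g::group_add set) \<Rightarrow> (nat \<Rightarrow> 'g set) \<Rightarrow> 'g \<Rightarrow> nat" where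
  "eta r \<Gamma> D h = alpha r (Suc (LEAST m. h \<in> setprod (J \<Gamma> D m) (\<Gamma> (Suc m))))"

definition shift :: "'g::group_add \<Rightarrow> ('g \<Rightarrow> 'a) \<Rightarrow> ('g \<Rightarrow> 'a)" where
  "shift g x = (\<lambda>h. x (- g + h))"

definition Xsh :: "nat \<Rightarrow> (nat \<Rightarrow> 'g::{group_add,countable} set) \<Rightarrow> (nat \<Rightarrow> 'g set) \<Rightarrow> ('g \<Rightarrow> nat) set" where
  "Xsh r \<Gamma> D = closure (range (\<lambda>g. shift g (eta r \<Gamma> D)))"

definition Per :: "('g::group_add \<Rightarrow> nat) \<Rightarrow> 'g set \<Rightarrow> nat \<Rightarrow> 'g set" where
  "Per x H a = {g. \<forall>\<gamma>\<in>H. x (\<gamma> + g) = a}"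

definition Cn :: "nat \<Rightarrow> (nat \<Rightarrow> 'g::{group_add,countable} set) \<Rightarrow> (nat \<Rightarrow> 'g set) \<Rightarrow> nat \<Rightarrow> ('g \<Rightarrow> nat) set" where
  "Cn r \<Gamma> D n = {x \<in> Xsh r \<Gamma> D. \<forall>a\<in>{1..r}. Per x (\<Gamma> n) a = Per (eta r \<Gamma> D) (\<Gamma> n) a}"

definition Cni :: "nat \<Rightarrow> (nat \<Rightarrow> 'g::{group_add,countable} set) \<Rightarrow> (nat \<Rightarrow> 'g set) \<Rightarrow> nat \<Rightarrow> nat \<Rightarrow> ('g \<Rightarrow> nat) set" where
  "Cni r \<Gamma> D n i = {x \<in> Cn r \<Gamma> D n. \<forall>g\<in>J \<Gamma> D n. x g = i}"

definition Z :: "nat \<Rightarrow> (nat \<Rightarrow> 'g::{group_add,countable} set) \<Rightarrow> (nat \<Rightarrow> 'g set) \<Rightarrow> nat \<Rightarrow> nat \<Rightarrow> ('g \<Rightarrow> nat) set" where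
  "Z r \<Gamma> D i k = (\<Union>v\<in>D (i + k * r). shift (- v) ` Cni r \<Gamma> D (i + k * r) i)"

definition A :: "nat \<Rightarrow> (nat \<Rightarrow> 'g::{group_add,countable} set) \<Rightarrow> (nat \<Rightarrow> 'g set) \<Rightarrow> nat \<Rightarrow> ('g \<Rightarrow> nat) set" where
  "A r \<Gamma> D i = (\<Inter>g. \<Union>k. \<Inter>l\<in>{k..}. shift g ` Z r \<Gamma> D i l)"

text \<open>The G-odometer: compatible sequences of cosets (x_n \<in> G/\<Gamma>_n, x_{n+1} \<subseteq> x_n),
with the product of the discrete \<sigma>-algebras (= Borel \<sigma>-algebra of the product topology),
and action by left multiplication.\<close>
definition odometer :: "(nat \<Rightarrow> 'g::group_add set) \<Rightarrow> (nat \<Rightarrow> 'g set) set" where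
  "odometer \<Gamma> = {x. (\<forall>n. x n \<in> quot (\<Gamma> n)) \<and> (\<forall>n. x (Suc n) \<subseteq> x n)}"

definition odometer_space :: "(nat \<Rightarrow> 'g::group_add set) \<Rightarrow> (nat \<Rightarrow> 'g set) measure" where
  "odometer_space \<Gamma> = restrict_space (PiM UNIV (\<lambda>n. count_space (quot (\<Gamma> n)))) (odometer \<Gamma>)"

definition odo_act :: "'g::group_add \<Rightarrow> (nat \<Rightarrow> 'g set) \<Rightarrow> (nat \<Rightarrow> 'g set)" where
  "odo_act g x = (\<lambda>n. lcoset g (x n))"

definition invariant_prob :: "('g \<Rightarrow> 'a \<Rightarrow> 'a) \<Rightarrow> 'a measure \<Rightarrow> bool" where
  "invariant_prob T M \<longleftrightarrow> prob_space M \<and>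
     (\<forall>g. T g \<in> measurable M M \<and> (\<forall>B\<in>sets M. emeasure M (T g -` B \<inter> space M) = emeasure M B))"

definition meas_conj :: "('g \<Rightarrow> 'a \<Rightarrow> 'a) \<Rightarrow> 'a measure \<Rightarrow> ('g \<Rightarrow> 'b \<Rightarrow> 'b) \<Rightarrow> 'b measure \<Rightarrow> bool" where
  "meas_conj T M S N \<longleftrightarrow> (\<exists>X0 Y0 f.
     X0 \<in> sets M \<and> Y0 \<in> sets N \<and>
     emeasure M (space M - X0) = 0 \<and> emeasure N (space N - Y0) = 0 \<and>
     (\<forall>g. \<forall>x\<in>X0. T g x \<in> X0) \<and> (\<forall>g. \<forall>y\<in>Y0. S g y \<in> Y0) \<and>
     bij_betw f X0 Y0 \<and>
     f \<in> measurable (restrict_space M X0) (restrict_space N Y0) \<and>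
     the_inv_into X0 f \<in> measurable (restrict_space N Y0) (restrict_space M X0) \<and>
     (\<forall>g. \<forall>x\<in>X0. f (T g x) = S g (f x)) \<and>
     (\<forall>B\<in>sets N. B \<subseteq> Y0 \<longrightarrow> emeasure N B = emeasure M (f -` B \<inter> X0)))"

end

theory Submission
  imports Defs
begin

declare add_uminus_conv_diff[simp del]

lemma lcoset_iff: "x \<in> lcoset g H \<longleftrightarrow> (-g + x) \<in> H"
proof
  assume "x \<in> lcoset g H" then obtain h where "h \<in> H" "x = g + h" unfolding lcoset_def by auto
  then show "-g + x \<in> H" by (simp add: add.assoc[symmetric])
next
  assume "-g + x \<in> H" then show "x \<in> lcoset g H" unfolding lcoset_def
    by (intro image_eqI[where x="-g+x"]) (simp_all add: add.assoc[symmetric])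
qed

lemma lcoset_lcoset: "lcoset a (lcoset b S) = lcoset (a + b) S"
  unfolding lcoset_def image_image by (simp add: add.assoc)

lemma lcoset_0: "lcoset 0 S = S" unfolding lcoset_def by simp

lemma lcoset_cancel: "lcoset (-g) (lcoset g S) = S"
  by (simp add: lcoset_lcoset lcoset_0)

lemma lcoset_inj: "lcoset g S = lcoset g T \<Longrightarrow> S = T"
  by (metis lcoset_cancel)

lemma shift_shift: "shift a (shift b x) = shift (a + b) x"
  unfolding shift_def by (simp add: minus_add add.assoc)

lemma shift_0: "shift 0 x = x" unfolding shift_def by simp

lemma Per_shift:
  assumes "is_normal H"
  shows "Per (shift g x) H a = lcoset g (Per x H a)"
proof -
  have sub: "is_subgroup H" and nor: "\<And>g h. h \<in> H \<Longrightarrow> g + h + - g \<in> H"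
    using assms unfolding is_normal_def by auto
  have eq: "k \<in> Per (shift g x) H a \<longleftrightarrow> -g + k \<in> Per x H a" for k
  proof
    assume k: "k \<in> Per (shift g x) H a"
    show "-g + k \<in> Per x H a" unfolding Per_def
    proof (intro CollectI ballI)
      fix \<gamma> assume "\<gamma> \<in> H"
      then have "g + \<gamma> + -g \<in> H" by (rule nor)
      with k have "x (- g + ((g + \<gamma> + -g) + k)) = a" unfolding Per_def shift_def by auto
      then show "x (\<gamma> + (-g + k)) = a" by (simp add: add.assoc)
    qed
  next
    assume k: "-g + k \<in> Per x H a"
    show "k \<in> Per (shift g x) H a" unfolding Per_def shift_def
    proof (intro CollectI ballI)
      fix \<gamma> assume "\<gamma> \<in> H"
      then have "-g + \<gamma> + - (-g) \<in> H" by (rule nor)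
      with k have "x ((-g + \<gamma> + - (-g)) + (-g + k)) = a" unfolding Per_def by auto
      then show "x (- g + (\<gamma> + k)) = a" by (simp add: add.assoc)
    qed
  qed
  then show ?thesis by (intro set_eqI) (simp only: lcoset_iff eq)
qed

lemma Per_left_inv:
  assumes "is_subgroup H" "\<gamma> \<in> H"
  shows "lcoset \<gamma> (Per x H a) = Per x H a"
proof -
  have eq: "k \<in> Per x H a \<longleftrightarrow> -\<gamma> + k \<in> Per x H a" for k
  proof
    assume k: "k \<in> Per x H a"
    show "-\<gamma> + k \<in> Per x H a" unfolding Per_def
    proof (intro CollectI ballI)
      fix \<delta> assume "\<delta> \<in> H"
      then have "\<delta> + -\<gamma> \<in> H" using assms unfolding is_subgroup_def by (auto simp:)
      with k have "x ((\<delta> + -\<gamma>) + k) = a" unfolding Per_def by auto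
      then show "x (\<delta> + (-\<gamma> + k)) = a" by (simp add: add.assoc)
    qed
  next
    assume k: "-\<gamma> + k \<in> Per x H a"
    show "k \<in> Per x H a" unfolding Per_def
    proof (intro CollectI ballI)
      fix \<delta> assume "\<delta> \<in> H"
      then have "\<delta> + \<gamma> \<in> H" using assms unfolding is_subgroup_def by (auto simp:)
      with k have "x ((\<delta> + \<gamma>) + (-\<gamma> + k)) = a" unfolding Per_def by auto
      then show "x (\<delta> + k) = a" by (simp add: add.assoc)
    qed
  qed
  then show ?thesis by (intro set_eqI) (subst lcoset_iff, rule eq[symmetric])
qed

lemma Per_sub:
  assumes "is_subgroup H" "is_subgroup K" "K \<subseteq> H"
  shows "Per x H a = {g. \<forall>\<gamma>\<in>H. \<gamma> + g \<in> Per x K a}"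
proof -
  have "g \<in> Per x H a \<longleftrightarrow> (\<forall>\<gamma>\<in>H. \<gamma> + g \<in> Per x K a)" for g
  proof
    assume g: "g \<in> Per x H a"
    show "\<forall>\<gamma>\<in>H. \<gamma> + g \<in> Per x K a" unfolding Per_def
    proof (intro ballI CollectI)
      fix \<gamma> \<delta> assume "\<gamma> \<in> H" "\<delta> \<in> K"
      then have "\<delta> + \<gamma> \<in> H" using assms unfolding is_subgroup_def by (auto simp:)
      with g show "x (\<delta> + (\<gamma> + g)) = a" unfolding Per_def by (auto simp: add.assoc[symmetric])
    qed
  next
    assume "\<forall>\<gamma>\<in>H. \<gamma> + g \<in> Per x K a"
    moreover have "0 \<in> K" using assms unfolding is_subgroup_def by (auto simp:)
    ultimately show "g \<in> Per x H a" unfolding Per_def by force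
  qed
  then show ?thesis by auto
qed

lemma Per_transfer:
  assumes "is_subgroup H" "is_subgroup K" "K \<subseteq> H" "Per x K a = Per y K a"
  shows "Per x H a = Per y H a"
  using Per_sub[OF assms(1-3), of x a] Per_sub[OF assms(1-3), of y a] assms(4) by simp

lemma coset_eq:
  assumes "is_subgroup H" "lcoset a H \<inter> lcoset b H \<noteq> {}"
  shows "lcoset a H = lcoset b H"
proof -
  from assms(2) obtain z where "-a + z \<in> H" "-b + z \<in> H" by (auto simp: lcoset_iff)
  then have "(-a + z) + - (-b + z) \<in> H" using assms(1) unfolding is_subgroup_def by (auto simp:)
  then have ab: "-a + b \<in> H" by (simp add: minus_add add.assoc)
  have "x \<in> lcoset a H \<longleftrightarrow> x \<in> lcoset b H" for x
  proof
    assume "x \<in> lcoset a H"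
    then have "-a + x \<in> H" by (simp add: lcoset_iff)
    with ab have "- (-a + b) + (-a + x) \<in> H" using assms(1) unfolding is_subgroup_def by (auto simp:)
    then show "x \<in> lcoset b H" by (simp add: lcoset_iff minus_add add.assoc)
  next
    assume "x \<in> lcoset b H"
    then have "-b + x \<in> H" by (simp add: lcoset_iff)
    with ab have "(-a + b) + (-b + x) \<in> H" using assms(1) unfolding is_subgroup_def by (auto simp:)
    then show "x \<in> lcoset a H" by (simp add: lcoset_iff add.assoc)
  qed
  then show ?thesis by auto
qed

lemma lcoset_self: "is_subgroup H \<Longrightarrow> g \<in> lcoset g H"
  by (simp add: lcoset_iff is_subgroup_def)

lemma setprod_iff: "x \<in> setprod S T \<longleftrightarrow> (\<exists>a\<in>S. \<exists>b\<in>T. x = a + b)"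
  unfolding setprod_def by auto

lemma alpha_range: "1 < r \<Longrightarrow> alpha r m \<in> {1..r}"
  unfolding alpha_def by (auto simp: less_imp_le)

lemma alpha_mod: "alpha r m mod r = m mod r"
  unfolding alpha_def by auto

lemma alpha_Suc_ne: assumes "1 < r" shows "alpha r (Suc m) \<noteq> alpha r m"
proof
  assume "alpha r (Suc m) = alpha r m"
  then have "Suc m mod r = m mod r" by (metis alpha_mod)
  then show False using mod_Suc[of m r] assms by (auto split: if_splits)
qed

locale TS =
  fixes r :: nat and \<Gamma> :: "nat \<Rightarrow> 'g::{group_add,countable} set" and D :: "nat \<Rightarrow> 'g set"
  assumes ts: "toeplitz_setting r \<Gamma> D"
begin

abbreviation ee where "ee \<equiv> eta r \<Gamma> D"
abbreviation P where "P n a \<equiv> Per ee (\<Gamma> n) a"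
abbreviation JJ where "JJ \<equiv> J \<Gamma> D"
abbreviation UU where "UU \<equiv> Ucum \<Gamma> D"

lemma tsp1: "1 < r"
  using ts unfolding toeplitz_setting_def by (elim conjE)
lemma tsp2: "\<Gamma> 0 = UNIV"
  using ts unfolding toeplitz_setting_def by (elim conjE)
lemma tsp3: "\<forall>i\<ge>1. is_normal (\<Gamma> i) \<and> finite (quot (\<Gamma> i))"
  using ts unfolding toeplitz_setting_def by (elim conjE)
lemma tsp4: "\<forall>i. \<Gamma> (Suc i) \<subset> \<Gamma> i"
  using ts unfolding toeplitz_setting_def by (elim conjE)
lemma tsp5: "D 0 = {0}"
  using ts unfolding toeplitz_setting_def by (elim conjE)
lemma tsp6: "\<forall>i. \<forall>c\<in>quot (\<Gamma> i). \<exists>!d. d \<in> D i \<and> d \<in> c"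
  using ts unfolding toeplitz_setting_def by (elim conjE)
lemmas tsp = tsp1 tsp2 tsp3 tsp4 tsp5 tsp6

lemma r_gt1: "1 < r" by (rule tsp)
lemma Gamma0: "\<Gamma> 0 = UNIV" by (rule tsp)

lemma normal: "is_normal (\<Gamma> k)"
proof (cases "k = 0")
  case True then show ?thesis by (simp add: Gamma0 is_normal_def is_subgroup_def)
next
  case False then show ?thesis using tsp(3) by simp
qed

lemma subgrp: "is_subgroup (\<Gamma> k)" using normal is_normal_def by blast
lemma G0: "0 \<in> \<Gamma> k" using subgrp is_subgroup_def by blast
lemma Gadd: "a \<in> \<Gamma> k \<Longrightarrow> b \<in> \<Gamma> k \<Longrightarrow> a + b \<in> \<Gamma> k" using subgrp is_subgroup_def by blast
lemma Gneg: "a \<in> \<Gamma> k \<Longrightarrow> - a \<in> \<Gamma> k" using subgrp is_subgroup_def by blast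
lemma Gconj: "h \<in> \<Gamma> k \<Longrightarrow> g + h + - g \<in> \<Gamma> k" using normal is_normal_def by blast
lemma Gconj': "h \<in> \<Gamma> k \<Longrightarrow> - g + h + g \<in> \<Gamma> k" using Gconj[of h k "-g"] by simp

lemma anti: "n \<le> m \<Longrightarrow> \<Gamma> m \<subseteq> \<Gamma> n"
proof -
  assume "n \<le> m"
  moreover have "\<And>i. \<Gamma> (Suc i) \<subseteq> \<Gamma> i" using tsp(4) by blast
  ultimately show ?thesis using lift_Suc_antimono_le[of \<Gamma> n m] by blast
qed

lemma strict: "\<exists>\<gamma> \<in> \<Gamma> k. \<gamma> \<notin> \<Gamma> (Suc k)"
  using tsp4[rule_format, of k] by blast

lemma lcoset_UNIV: "lcoset g UNIV = UNIV"
  by (auto simp: lcoset_iff)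

lemma quot0: "quot (\<Gamma> 0) = {UNIV}"
  unfolding quot_def Gamma0 lcoset_UNIV by auto

lemma quot_fin: "finite (quot (\<Gamma> k))"
proof (cases "k = 0")
  case True then show ?thesis using quot0 by simp
next
  case False then show ?thesis using tsp(3) by simp
qed

lemma lcoset_quot: "lcoset g (\<Gamma> k) \<in> quot (\<Gamma> k)"
  unfolding quot_def by auto

lemma D_ex1: "c \<in> quot (\<Gamma> k) \<Longrightarrow> \<exists>!d. d \<in> D k \<and> d \<in> c"
  using tsp6 by blast

lemma rep_ex: "\<exists>d \<in> D k. d \<in> lcoset g (\<Gamma> k)"
  using D_ex1[OF lcoset_quot] by blast

lemma rep_uniq: "d \<in> D k \<Longrightarrow> d' \<in> D k \<Longrightarrow> d \<in> lcoset g (\<Gamma> k) \<Longrightarrow> d' \<in> lcoset g (\<Gamma> k) \<Longrightarrow> d = d'"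
  using D_ex1[OF lcoset_quot, of k g] by blast

lemma D00: "D 0 = {0}" by (rule tsp)

lemma Ucum_eq: "UU n = (\<Union>m<n. setprod (JJ m) (\<Gamma> (Suc m)))"
  by (induction n) (auto simp: J_def lessThan_Suc)

lemma Ucum_rinv:
  assumes "u \<in> UU n" "\<gamma> \<in> \<Gamma> n" shows "u + \<gamma> \<in> UU n"
proof -
  from assms(1) obtain m j b where m: "m < n" "j \<in> JJ m" "b \<in> \<Gamma> (Suc m)" "u = j + b"
    by (auto simp: Ucum_eq setprod_iff)
  have "\<gamma> \<in> \<Gamma> (Suc m)" using anti[of "Suc m" n] m assms by auto
  then have "b + \<gamma> \<in> \<Gamma> (Suc m)" using m Gadd by auto
  then have "j + (b + \<gamma>) \<in> setprod (JJ m) (\<Gamma> (Suc m))" using m by (auto simp: setprod_iff)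
  then show ?thesis unfolding Ucum_eq using m by (auto simp: add.assoc)
qed

lemma J_notU: "d \<in> JJ k \<Longrightarrow> d \<notin> UU k"
  by (cases "k = 0") (auto simp: J_def)

lemma J_D: "JJ k \<subseteq> D k"
  using D00 by (cases "k = 0") (auto simp: J_def)

lemma J_cases: "1 \<le> n \<Longrightarrow> d \<in> D n \<Longrightarrow> d \<notin> UU n \<Longrightarrow> d \<in> JJ n"
  by (auto simp: J_def)

lemma eta_J:
  assumes "j \<in> JJ m" "\<gamma> \<in> \<Gamma> (Suc m)"
  shows "ee (j + \<gamma>) = alpha r (Suc m)"
proof -
  have "(LEAST m'. j + \<gamma> \<in> setprod (JJ m') (\<Gamma> (Suc m'))) = m"
  proof (rule Least_equality)
    show "j + \<gamma> \<in> setprod (JJ m) (\<Gamma> (Suc m))" using assms by (auto simp: setprod_iff)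
  next
    fix y assume y: "j + \<gamma> \<in> setprod (JJ y) (\<Gamma> (Suc y))"
    show "m \<le> y"
    proof (rule ccontr)
      assume "\<not> m \<le> y"
      then have "j + \<gamma> \<in> UU m" using y unfolding Ucum_eq by auto
      moreover have "- \<gamma> \<in> \<Gamma> m" using assms(2) anti[of m "Suc m"] Gneg by auto
      ultimately have "(j + \<gamma>) + - \<gamma> \<in> UU m" by (rule Ucum_rinv)
      then show False using J_notU[OF assms(1)] by (simp add: add.assoc)
    qed
  qed
  then show ?thesis unfolding eta_def by simp
qed

lemma eta_J0: "j \<in> JJ m \<Longrightarrow> ee j = alpha r (Suc m)"
  using eta_J[of j m 0] G0 by simp

lemma L_per:
  assumes "j \<in> JJ m" "\<gamma> \<in> \<Gamma> (Suc m)" "m < n"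
  shows "j + \<gamma> \<in> P n (alpha r (Suc m))"
  unfolding Per_def
proof (intro CollectI ballI)
  fix \<delta> assume d: "\<delta> \<in> \<Gamma> n"
  have "- j + \<delta> + j \<in> \<Gamma> (Suc m)" using Gconj'[OF d] anti[of "Suc m" n] assms(3) by auto
  then have "(- j + \<delta> + j) + \<gamma> \<in> \<Gamma> (Suc m)" using Gadd assms(2) by auto
  then have "ee (j + ((- j + \<delta> + j) + \<gamma>)) = alpha r (Suc m)" using eta_J[OF assms(1)] by blast
  then show "ee (\<delta> + (j + \<gamma>)) = alpha r (Suc m)" by (simp add: add.assoc)
qed

lemma U_per:
  assumes "u \<in> UU n" shows "u \<in> P n (ee u)" "ee u \<in> {1..r}"
proof -
  from assms obtain m j b where m: "m < n" "j \<in> JJ m" "b \<in> \<Gamma> (Suc m)" "u = j + b"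
    by (auto simp: Ucum_eq setprod_iff)
  then show "u \<in> P n (ee u)" using L_per eta_J by auto
  show "ee u \<in> {1..r}" using m eta_J alpha_range r_gt1 by auto
qed

lemma Jnext:
  assumes d: "d \<in> JJ k" and e1: "e \<in> lcoset d (\<Gamma> k)" and e2: "e \<notin> lcoset d (\<Gamma> (Suc k))"
    and d2: "d2 \<in> D (Suc k)" "d2 \<in> lcoset e (\<Gamma> (Suc k))"
  shows "d2 \<in> JJ (Suc k)"
proof -
  have c1: "-d + e \<in> \<Gamma> k" using e1 by (simp add: lcoset_iff)
  have c2: "-e + d2 \<in> \<Gamma> k" using d2 anti[of k "Suc k"] by (auto simp: lcoset_iff)
  have "(-d + e) + (-e + d2) \<in> \<Gamma> k" using c1 c2 Gadd by blast
  then have c3: "-d + d2 \<in> \<Gamma> k" by (simp add: add.assoc)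
  have n1: "d2 \<notin> UU k"
  proof
    assume "d2 \<in> UU k"
    then have "d2 + - (-d + d2) \<in> UU k" using Ucum_rinv Gneg c3 by blast
    then show False using J_notU[OF d] by (simp add: minus_add add.assoc)
  qed
  have n2: "d2 \<notin> setprod (JJ k) (\<Gamma> (Suc k))"
  proof
    assume "d2 \<in> setprod (JJ k) (\<Gamma> (Suc k))"
    then obtain j b where jb: "j \<in> JJ k" "b \<in> \<Gamma> (Suc k)" "d2 = j + b" by (auto simp: setprod_iff)
    have "b \<in> \<Gamma> k" using jb anti[of k "Suc k"] by auto
    then have "-d + d2 + - b \<in> \<Gamma> k" using c3 Gadd Gneg by blast
    then have "j \<in> lcoset d (\<Gamma> k)" using jb by (simp add: lcoset_iff add.assoc)
    moreover have "d \<in> lcoset d (\<Gamma> k)" by (rule lcoset_self[OF subgrp])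
    ultimately have "j = d" using rep_uniq J_D jb d by blast
    then have "-d + d2 \<in> \<Gamma> (Suc k)" using jb by (simp add: add.assoc[symmetric])
    moreover have "-e + d2 \<in> \<Gamma> (Suc k)" using d2 by (simp add: lcoset_iff)
    ultimately have "(-d + d2) + - (-e + d2) \<in> \<Gamma> (Suc k)" using Gadd Gneg by blast
    then have "-d + e \<in> \<Gamma> (Suc k)" by (simp add: minus_add add.assoc)
    then show False using e2 by (simp add: lcoset_iff)
  qed
  have "UU (Suc k) = UU k \<union> setprod (JJ k) (\<Gamma> (Suc k))" by (simp add: J_def)
  then show ?thesis using n1 n2 d2 by (auto simp: J_def)
qed

lemma J_ne: "JJ k \<noteq> {}"
proof (induction k)
  case 0 then show ?case by (simp add: J_def)
next
  case (Suc k)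
  then obtain d where d: "d \<in> JJ k" by auto
  obtain \<gamma> where g: "\<gamma> \<in> \<Gamma> k" "\<gamma> \<notin> \<Gamma> (Suc k)" using strict by blast
  obtain d2 where d2: "d2 \<in> D (Suc k)" "d2 \<in> lcoset (d + \<gamma>) (\<Gamma> (Suc k))" using rep_ex by blast
  have "d2 \<in> JJ (Suc k)"
    by (rule Jnext[OF d _ _ d2]) (use g in \<open>auto simp: lcoset_iff add.assoc[symmetric]\<close>)
  then show ?case by auto
qed

lemma stab:
  assumes n: "1 \<le> n" and inv: "\<And>a. a \<in> {1..r} \<Longrightarrow> lcoset g (P n a) = P n a"
  shows "g \<in> \<Gamma> n"
proof -
  have inv': "lcoset (-g) (P n a) = P n a" if "a \<in> {1..r}" for a
    using inv[OF that] by (metis lcoset_cancel)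
  have "k \<le> n \<Longrightarrow> g \<in> \<Gamma> k" for k
  proof (induction k)
    case 0 then show ?case by (simp add: Gamma0)
  next
    case (Suc k)
    then have gk: "g \<in> \<Gamma> k" by auto
    obtain d where d: "d \<in> JJ k" using J_ne by blast
    show ?case
    proof (rule ccontr)
      assume ng: "g \<notin> \<Gamma> (Suc k)"
      define e where "e = g + d"
      have e1: "e \<in> lcoset d (\<Gamma> k)" using Gconj'[OF gk, of d] by (simp add: e_def lcoset_iff add.assoc)
      have e2: "e \<notin> lcoset d (\<Gamma> (Suc k))"
      proof
        assume "e \<in> lcoset d (\<Gamma> (Suc k))"
        then have "-d + g + d \<in> \<Gamma> (Suc k)" by (simp add: e_def lcoset_iff add.assoc)
        then have "d + (-d + g + d) + - d \<in> \<Gamma> (Suc k)" by (rule Gconj)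
        then show False using ng by (simp add: add.assoc)
      qed
      obtain d2 where d2: "d2 \<in> D (Suc k)" "d2 \<in> lcoset e (\<Gamma> (Suc k))" using rep_ex by blast
      have jd2: "d2 \<in> JJ (Suc k)" by (rule Jnext[OF d e1 e2 d2])
      have v2: "ee d2 = alpha r (Suc (Suc k))" by (rule eta_J0[OF jd2])
      define b where "b = -e + d2"
      have b: "b \<in> \<Gamma> (Suc k)" using d2 by (simp add: b_def lcoset_iff)
      have gd2: "-g + d2 = d + b" by (simp add: b_def e_def minus_add add.assoc)
      have v1: "ee (-g + d2) = alpha r (Suc k)" using eta_J[OF d b] gd2 by simp
      show False
      proof (cases "Suc k < n")
        case True
        have "d2 + 0 \<in> P n (alpha r (Suc (Suc k)))" by (rule L_per[OF jd2 G0 True])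
        then have "d2 \<in> lcoset g (P n (alpha r (Suc (Suc k))))"
          using inv[OF alpha_range[OF r_gt1]] by simp
        then have "-g + d2 \<in> P n (alpha r (Suc (Suc k)))" by (simp add: lcoset_iff)
        then have "ee (0 + (-g + d2)) = alpha r (Suc (Suc k))" unfolding Per_def using G0 by blast
        moreover have "alpha r (Suc (Suc k)) \<noteq> alpha r (Suc k)" by (rule alpha_Suc_ne[OF r_gt1])
        ultimately show False using v1 by simp
      next
        case False
        with Suc.prems have nk: "n = Suc k" by auto
        have "d + b \<in> P n (alpha r (Suc k))" by (rule L_per[OF d b]) (simp add: nk)
        then have "d2 \<in> lcoset g (P n (alpha r (Suc k)))" using gd2 by (simp add: lcoset_iff)
        then have "d2 \<in> P n (alpha r (Suc k))" using inv[OF alpha_range[OF r_gt1]] by simp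
        then have "ee (0 + d2) = alpha r (Suc k)" unfolding Per_def using G0 by blast
        moreover have "alpha r (Suc (Suc k)) \<noteq> alpha r (Suc k)" by (rule alpha_Suc_ne[OF r_gt1])
        ultimately show False using v2 by simp
      qed
    qed
  qed
  then show ?thesis by simp
qed

end

definition evl :: "(nat \<Rightarrow> nat) \<Rightarrow> nat" where
  "evl f = (if \<exists>a k. \<forall>l\<ge>k. f l = a then THE a. \<exists>k. \<forall>l\<ge>k. f l = a else 0)"

lemma evl_eq:
  assumes "\<forall>l\<ge>k. f l = a" shows "evl f = a"
proof -
  have "(THE a. \<exists>k. \<forall>l\<ge>k. f l = a) = a"
  proof (rule the_equality)
    show "\<exists>k. \<forall>l\<ge>k. f l = a" using assms by blast
  next
    fix b assume "\<exists>k. \<forall>l\<ge>k. f l = b"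
    then obtain k' where "\<forall>l\<ge>k'. f l = b" by blast
    then show "b = a" using assms[rule_format, of "max k k'"] by auto
  qed
  then show ?thesis unfolding evl_def using assms by auto
qed

lemma lcoset_mono: "S \<subseteq> T \<Longrightarrow> lcoset g S \<subseteq> lcoset g T"
  unfolding lcoset_def by auto

context TS begin

definition skel :: "('g \<Rightarrow> nat) \<Rightarrow> nat \<Rightarrow> 'g \<Rightarrow> bool" where
  "skel x n v \<longleftrightarrow> (\<forall>a\<in>{1..r}. Per x (\<Gamma> n) a = lcoset (-v) (P n a))"

definition pimap :: "('g \<Rightarrow> nat) \<Rightarrow> nat \<Rightarrow> 'g set" where
  "pimap x = (\<lambda>n. if n = 0 then UNIV else lcoset (-(SOME v. skel x n v)) (\<Gamma> n))"

lemma skel_iff: "skel x n v \<longleftrightarrow> (\<forall>a\<in>{1..r}. Per (shift v x) (\<Gamma> n) a = P n a)"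
proof -
  have "Per x (\<Gamma> n) a = lcoset (-v) (P n a) \<longleftrightarrow> Per (shift v x) (\<Gamma> n) a = P n a" for a
  proof
    assume "Per x (\<Gamma> n) a = lcoset (-v) (P n a)"
    then show "Per (shift v x) (\<Gamma> n) a = P n a"
      by (simp add: Per_shift[OF normal] lcoset_lcoset lcoset_0)
  next
    assume "Per (shift v x) (\<Gamma> n) a = P n a"
    then have "lcoset v (Per x (\<Gamma> n) a) = P n a" by (simp add: Per_shift[OF normal])
    then show "Per x (\<Gamma> n) a = lcoset (-v) (P n a)" by (metis lcoset_cancel)
  qed
  then show ?thesis unfolding skel_def by blast
qed

lemma skel_mono: "skel x m v \<Longrightarrow> n \<le> m \<Longrightarrow> skel x n v"
  unfolding skel_iff using Per_transfer[OF subgrp subgrp anti] by blast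

lemma skel_unique:
  assumes n: "1 \<le> n" and s: "skel x n v" "skel x n w"
  shows "lcoset (-v) (\<Gamma> n) = lcoset (-w) (\<Gamma> n)"
proof -
  have "lcoset (w + -v) (P n a) = P n a" if a: "a \<in> {1..r}" for a
  proof -
    have "lcoset (-v) (P n a) = lcoset (-w) (P n a)" using s a unfolding skel_def by auto
    then have "lcoset w (lcoset (-v) (P n a)) = lcoset w (lcoset (-w) (P n a))" by simp
    then show ?thesis by (simp add: lcoset_lcoset lcoset_0)
  qed
  then have g: "w + -v \<in> \<Gamma> n" by (rule stab[OF n])
  have "-v \<in> lcoset (-w) (\<Gamma> n)" using g by (simp add: lcoset_iff)
  moreover have "-v \<in> lcoset (-v) (\<Gamma> n)" by (rule lcoset_self[OF subgrp])
  ultimately show ?thesis using coset_eq[OF subgrp] by blast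
qed

lemma skel_coset:
  assumes s: "skel x n v" and c: "lcoset (-v) (\<Gamma> n) = lcoset (-w) (\<Gamma> n)"
  shows "skel x n w"
proof -
  have "-w \<in> lcoset (-v) (\<Gamma> n)" using c lcoset_self[OF subgrp] by simp
  then have g: "v + -w \<in> \<Gamma> n" by (simp add: lcoset_iff)
  have "lcoset (-w) (P n a) = lcoset (-v) (P n a)" for a
  proof -
    have "lcoset (-v) (P n a) = lcoset (-v) (lcoset (v + -w) (P n a))"
      using Per_left_inv[OF subgrp g] by simp
    also have "\<dots> = lcoset (-w) (P n a)" by (simp add: lcoset_lcoset add.assoc[symmetric])
    finally show ?thesis by simp
  qed
  then show ?thesis using s unfolding skel_def by simp
qed

lemma skel_shift: "skel x n v \<Longrightarrow> skel (shift g x) n (v + -g)"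
  unfolding skel_def by (simp add: Per_shift[OF normal] lcoset_lcoset minus_add)

end

locale TSi = TS +
  fixes i :: nat
  assumes i1: "1 \<le> i" and i2: "i \<le> r"
begin

abbreviation AA where "AA \<equiv> A r \<Gamma> D i"

lemma A_mem:
  assumes "x \<in> AA"
  shows "\<exists>k. \<forall>l\<ge>k. \<exists>v\<in>D (i + l*r). shift (v + -g) x \<in> Cni r \<Gamma> D (i + l*r) i"
proof -
  from assms have "x \<in> (\<Union>k. \<Inter>l\<in>{k..}. shift g ` Z r \<Gamma> D i l)" unfolding A_def by blast
  then obtain k where k: "\<forall>l\<ge>k. x \<in> shift g ` Z r \<Gamma> D i l" by auto
  have "\<exists>v\<in>D (i + l*r). shift (v + -g) x \<in> Cni r \<Gamma> D (i + l*r) i" if l: "l \<ge> k" for l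
  proof -
    from k l obtain z where z: "z \<in> Z r \<Gamma> D i l" "x = shift g z" by auto
    from z(1) obtain v c where vc: "v \<in> D (i + l*r)" "c \<in> Cni r \<Gamma> D (i + l*r) i" "z = shift (-v) c"
      unfolding Z_def by auto
    have "shift (v + -g) x = shift ((v + -g) + (g + -v)) c" using z vc by (simp add: shift_shift)
    also have "\<dots> = c" by (simp add: add.assoc shift_0)
    finally show ?thesis using vc by auto
  qed
  then show ?thesis by blast
qed

lemma A_shift:
  assumes "x \<in> AA" shows "shift h x \<in> AA"
  unfolding A_def
proof (intro INT_I UNIV_I)
  fix g
  from assms have "x \<in> (\<Union>k. \<Inter>l\<in>{k..}. shift (-h + g) ` Z r \<Gamma> D i l)" unfolding A_def by blast
  then obtain k where k: "\<forall>l\<ge>k. x \<in> shift (-h + g) ` Z r \<Gamma> D i l" by auto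
  have "shift h x \<in> shift g ` Z r \<Gamma> D i l" if "l \<ge> k" for l
  proof -
    from k that obtain z where z: "z \<in> Z r \<Gamma> D i l" "x = shift (-h + g) z" by auto
    then have "shift h x = shift g z" by (simp add: shift_shift add.assoc[symmetric])
    then show ?thesis using z by auto
  qed
  then show "shift h x \<in> (\<Union>k. \<Inter>l\<in>{k..}. shift g ` Z r \<Gamma> D i l)" by auto
qed

lemma A_level:
  assumes "x \<in> AA"
  shows "\<exists>k. \<forall>l\<ge>k. \<exists>v\<in>D (i + l*r). skel x (i + l*r) (v + -g)
            \<and> x g = (if v \<in> UU (i + l*r) then ee v else i)"
proof -
  from A_mem[OF assms, of g] obtain k where
    k: "\<forall>l\<ge>k. \<exists>v\<in>D (i + l*r). shift (v + -g) x \<in> Cni r \<Gamma> D (i + l*r) i" by blast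
  have "\<exists>v\<in>D (i + l*r). skel x (i + l*r) (v + -g) \<and> x g = (if v \<in> UU (i + l*r) then ee v else i)"
    if l: "l \<ge> k" for l
  proof -
    define m where "m = i + l*r"
    from k l obtain v where v: "v \<in> D m" "shift (v + -g) x \<in> Cni r \<Gamma> D m i" unfolding m_def by blast
    define c where "c = shift (v + -g) x"
    have cper: "\<forall>a\<in>{1..r}. Per c (\<Gamma> m) a = P m a" and cJ: "\<forall>j\<in>JJ m. c j = i"
      using v(2) unfolding c_def Cni_def Cn_def by auto
    have sk: "skel x m (v + -g)" using cper unfolding skel_iff c_def by simp
    have cv: "c v = x g" unfolding c_def shift_def by (simp add: minus_add add.assoc)
    have "x g = (if v \<in> UU m then ee v else i)"
    proof (cases "v \<in> UU m")
      case True
      then have "v \<in> Per c (\<Gamma> m) (ee v)" using U_per[OF True] cper by auto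
      then have "c (0 + v) = ee v" unfolding Per_def using G0 by blast
      then show ?thesis using True cv by simp
    next
      case False
      have "1 \<le> m" using i1 by (simp add: m_def)
      then have "v \<in> JJ m" using J_cases v(1) False by blast
      then show ?thesis using cJ cv False by auto
    qed
    then show ?thesis using sk v unfolding m_def by blast
  qed
  then show ?thesis by blast
qed

lemma A_skel:
  assumes "x \<in> AA" "1 \<le> n" shows "\<exists>v. skel x n v"
proof -
  from A_level[OF assms(1), of 0] obtain k where
    k: "\<forall>l\<ge>k. \<exists>v\<in>D (i + l*r). skel x (i + l*r) (v + -0)" by meson
  define l where "l = max k n"
  have "\<exists>v\<in>D (i + l*r). skel x (i + l*r) (v + -0)" using k l_def by simp
  then obtain v where v: "skel x (i + l*r) v" by auto
  have "l \<le> l * r" using r_gt1 by simp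
  moreover have "n \<le> l" unfolding l_def by simp
  ultimately have "n \<le> i + l*r" by linarith
  then show ?thesis using skel_mono[OF v] by blast
qed

lemma pi_eq:
  assumes "x \<in> AA" "1 \<le> n" "skel x n v"
  shows "pimap x n = lcoset (-v) (\<Gamma> n)"
proof -
  have "skel x n (SOME v. skel x n v)" using A_skel[OF assms(1,2)] by (rule someI_ex)
  then have "lcoset (-(SOME v. skel x n v)) (\<Gamma> n) = lcoset (-v) (\<Gamma> n)"
    using skel_unique[OF assms(2)] assms(3) by blast
  then show ?thesis unfolding pimap_def using assms(2) by simp
qed

lemma pi_odo:
  assumes "x \<in> AA" shows "pimap x \<in> odometer \<Gamma>"
  unfolding odometer_def
proof (intro CollectI conjI allI)
  fix n
  show "pimap x n \<in> quot (\<Gamma> n)"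
    by (cases "n = 0") (auto simp: pimap_def quot0 lcoset_quot)
  show "pimap x (Suc n) \<subseteq> pimap x n"
  proof (cases "n = 0")
    case True then show ?thesis by (simp add: pimap_def)
  next
    case False
    obtain v where v: "skel x (Suc n) v" using A_skel[OF assms, of "Suc n"] by auto
    then have v': "skel x n v" using skel_mono by auto
    show ?thesis using pi_eq[OF assms _ v] pi_eq[OF assms _ v'] False
      lcoset_mono[OF anti[of n "Suc n"]] by auto
  qed
qed

lemma pi_shift:
  assumes "x \<in> AA" shows "pimap (shift g x) = odo_act g (pimap x)"
proof
  fix n
  show "pimap (shift g x) n = odo_act g (pimap x) n"
  proof (cases "n = 0")
    case True then show ?thesis by (simp add: pimap_def odo_act_def lcoset_UNIV)
  next
    case False
    obtain v where v: "skel x n v" using A_skel[OF assms, of n] False by auto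
    have "pimap (shift g x) n = lcoset (-(v + -g)) (\<Gamma> n)"
      using pi_eq[OF A_shift[OF assms] _ skel_shift[OF v]] False by simp
    also have "\<dots> = lcoset g (lcoset (-v) (\<Gamma> n))" by (simp add: lcoset_lcoset minus_add)
    finally show ?thesis using pi_eq[OF assms _ v] False by (simp add: odo_act_def)
  qed
qed

definition fval where
  "fval m C h = (let v = (THE v. v \<in> D m \<and> lcoset (h + -v) (\<Gamma> m) = C) in if v \<in> UU m then ee v else i)"

lemma fval_eq:
  assumes v: "v \<in> D m" and C: "C = lcoset (h + -v) (\<Gamma> m)"
  shows "fval m C h = (if v \<in> UU m then ee v else i)"
proof -
  have "(THE v. v \<in> D m \<and> lcoset (h + -v) (\<Gamma> m) = C) = v"
  proof (rule the_equality)
    show "v \<in> D m \<and> lcoset (h + -v) (\<Gamma> m) = C" using assms by simp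
  next
    fix w assume w: "w \<in> D m \<and> lcoset (h + -w) (\<Gamma> m) = C"
    then have "h + -w \<in> lcoset (h + -v) (\<Gamma> m)" using C lcoset_self[OF subgrp] by metis
    then have "-(h + -v) + (h + -w) \<in> \<Gamma> m" by (simp add: lcoset_iff)
    then have "v + -w \<in> \<Gamma> m" by (simp add: minus_add add.assoc)
    then have "-(v + -w) \<in> \<Gamma> m" by (rule Gneg)
    then have "-v + (-(v + -w)) + v \<in> \<Gamma> m" by (rule Gconj')
    then have "w \<in> lcoset v (\<Gamma> m)" by (simp add: lcoset_iff minus_add add.assoc)
    then show "w = v" using rep_uniq[OF _ v _ lcoset_self[OF subgrp]] w by blast
  qed
  then show ?thesis unfolding fval_def by simp
qed

lemma A_fval:
  assumes "x \<in> AA"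
  shows "\<exists>k. \<forall>l\<ge>k. fval (i + l*r) (pimap x (i + l*r)) h = x h"
proof -
  from A_level[OF assms, of h] obtain k where
    k: "\<forall>l\<ge>k. \<exists>v\<in>D (i + l*r). skel x (i + l*r) (v + -h) \<and> x h = (if v \<in> UU (i + l*r) then ee v else i)"
    by blast
  have "fval (i + l*r) (pimap x (i + l*r)) h = x h" if "l \<ge> k" for l
  proof -
    from k that obtain v where v: "v \<in> D (i + l*r)" "skel x (i + l*r) (v + -h)"
      "x h = (if v \<in> UU (i + l*r) then ee v else i)" by blast
    have "pimap x (i + l*r) = lcoset (-(v + -h)) (\<Gamma> (i + l*r))"
      using pi_eq[OF assms _ v(2)] i1 by simp
    then have "pimap x (i + l*r) = lcoset (h + -v) (\<Gamma> (i + l*r))" by (simp add: minus_add)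
    then show ?thesis using fval_eq[OF v(1)] v(3) by simp
  qed
  then show ?thesis by blast
qed

definition psi where
  "psi y = (\<lambda>h. evl (\<lambda>l. fval (i + l*r) (y (i + l*r)) h))"

lemma psi_pi: "x \<in> AA \<Longrightarrow> psi (pimap x) = x"
proof
  fix h assume "x \<in> AA"
  from A_fval[OF this, of h] obtain k where "\<forall>l\<ge>k. fval (i + l*r) (pimap x (i + l*r)) h = x h" by blast
  then show "psi (pimap x) h = x h" unfolding psi_def by (rule evl_eq)
qed

lemma pi_inj: "inj_on pimap AA"
  by (rule inj_onI) (metis psi_pi)

end

lemma evl_meas: fixes f :: "nat \<Rightarrow> 'a \<Rightarrow> nat" assumes [measurable]: "\<And>l. f l \<in> measurable M (count_space UNIV)"
  shows "(\<lambda>y. evl (\<lambda>l. f l y)) \<in> measurable M (count_space UNIV)"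
proof (subst measurable_count_space_eq2_countable, intro conjI ballI)
  show "(\<lambda>y. evl (\<lambda>l. f l y)) \<in> space M \<rightarrow> UNIV" by simp
  fix a :: nat
  have S: "{y \<in> space M. \<exists>k. \<forall>l\<ge>k. f l y = a} \<in> sets M" by measurable
  have E: "{y \<in> space M. \<exists>b k. \<forall>l\<ge>k. f l y = b} \<in> sets M" by measurable
  have pt: "evl (\<lambda>l. f l y) = a \<longleftrightarrow> (\<exists>k. \<forall>l\<ge>k. f l y = a) \<or> (a = 0 \<and> \<not> (\<exists>b k. \<forall>l\<ge>k. f l y = b))" for y
  proof (cases "\<exists>b k. \<forall>l\<ge>k. f l y = b")
    case True
    then obtain b k where bk: "\<forall>l\<ge>k. f l y = b" by blast
    then have e: "evl (\<lambda>l. f l y) = b" by (rule evl_eq)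
    show ?thesis
    proof
      assume "evl (\<lambda>l. f l y) = a" then show "(\<exists>k. \<forall>l\<ge>k. f l y = a) \<or> (a = 0 \<and> \<not> (\<exists>b k. \<forall>l\<ge>k. f l y = b))"
        using e bk by blast
    next
      assume "(\<exists>k. \<forall>l\<ge>k. f l y = a) \<or> (a = 0 \<and> \<not> (\<exists>b k. \<forall>l\<ge>k. f l y = b))"
      then obtain k' where "\<forall>l\<ge>k'. f l y = a" using True by blast
      then show "evl (\<lambda>l. f l y) = a" by (rule evl_eq)
    qed
  next
    case False
    then have "evl (\<lambda>l. f l y) = 0" unfolding evl_def by auto
    then show ?thesis using False by auto
  qed
  have "(\<lambda>y. evl (\<lambda>l. f l y)) -` {a} \<inter> space M =
     {y \<in> space M. (\<exists>k. \<forall>l\<ge>k. f l y = a) \<or> (a = 0 \<and> \<not> (\<exists>b k. \<forall>l\<ge>k. f l y = b))}"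
    by (intro set_eqI) (simp only: vimage_eq Int_iff mem_Collect_eq singleton_iff pt conj_commute)
  also have "\<dots> \<in> sets M" by measurable
  finally show "(\<lambda>y. evl (\<lambda>l. f l y)) -` {a} \<inter> space M \<in> sets M" .
qed

context TS begin

abbreviation OS where "OS \<equiv> odometer_space \<Gamma>"
abbreviation ODO where "ODO \<equiv> odometer \<Gamma>"

lemma ODO_PiE: "ODO \<subseteq> (\<Pi>\<^sub>E n\<in>UNIV. quot (\<Gamma> n))"
  unfolding odometer_def by (auto simp: PiE_iff)

lemma space_OS: "space OS = ODO"
  unfolding odometer_space_def using ODO_PiE by (auto simp: space_restrict_space space_PiM)

lemma coord_meas: "(\<lambda>y. y n) \<in> measurable OS (count_space (quot (\<Gamma> n)))"
  unfolding odometer_space_def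
  by (rule measurable_restrict_space1, rule measurable_component_singleton) simp

lemma quot_eq:
  assumes "S \<in> quot (\<Gamma> m)" "T \<in> quot (\<Gamma> m)" "S \<inter> T \<noteq> {}" shows "S = T"
  using assms coset_eq[OF subgrp] unfolding quot_def by auto

lemma quot_ne: "S \<in> quot (\<Gamma> m) \<Longrightarrow> S \<noteq> {}"
  unfolding quot_def using lcoset_self[OF subgrp] by auto

lemma chain: "y \<in> ODO \<Longrightarrow> m \<le> n \<Longrightarrow> y n \<subseteq> y m"
  unfolding odometer_def using lift_Suc_antimono_le[of y m n] by auto

definition cyl where "cyl n C = {y \<in> ODO. y n = C}"

lemma cyl_sub:
  assumes y0: "y0 \<in> cyl n C" "y0 \<in> cyl m C'" and mn: "m \<le> n"
  shows "cyl n C \<subseteq> cyl m C'"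
proof
  fix y assume y: "y \<in> cyl n C"
  have Cq: "C \<in> quot (\<Gamma> n)" using y0 unfolding cyl_def odometer_def by auto
  have "y m \<in> quot (\<Gamma> m)" "C' \<in> quot (\<Gamma> m)" using y y0 unfolding cyl_def odometer_def by auto
  moreover have "C \<subseteq> y m" using chain[OF _ mn, of y] y unfolding cyl_def by auto
  moreover have "C \<subseteq> C'" using chain[OF _ mn, of y0] y0 unfolding cyl_def by auto
  ultimately have "y m = C'" using quot_eq quot_ne[OF Cq] by blast
  then show "y \<in> cyl m C'" using y unfolding cyl_def by auto
qed

definition EE where "EE = insert {} {cyl n C | n C. C \<in> quot (\<Gamma> n)}"

lemma EE_stable: "Int_stable EE"
  unfolding Int_stable_def
proof (intro ballI)
  fix a b assume a: "a \<in> EE" and b: "b \<in> EE"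
  show "a \<inter> b \<in> EE"
  proof (cases "a \<inter> b = {}")
    case True then show ?thesis by (simp add: EE_def)
  next
    case False
    then obtain y0 where y0: "y0 \<in> a" "y0 \<in> b" by auto
    from a y0 obtain n C where a': "a = cyl n C" "C \<in> quot (\<Gamma> n)" unfolding EE_def by auto
    from b y0 obtain m C' where b': "b = cyl m C'" "C' \<in> quot (\<Gamma> m)" unfolding EE_def by auto
    show ?thesis
    proof (cases "m \<le> n")
      case True
      then have "a \<subseteq> b" using cyl_sub y0 a' b' by blast
      then show ?thesis using a by (simp add: Int_absorb2)
    next
      case False
      then have "b \<subseteq> a" using cyl_sub y0 a' b' by (metis nle_le)
      then show ?thesis using b by (simp add: Int_absorb1)
    qed
  qed
qed

lemma EE_Pow: "EE \<subseteq> Pow ODO"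
  unfolding EE_def cyl_def by auto

lemma cyl_sets: "cyl n C \<in> sets OS"
proof -
  have "(\<lambda>y. y n) -` {C} \<inter> space OS \<in> sets OS"
  proof (cases "C \<in> quot (\<Gamma> n)")
    case True then show ?thesis using measurable_sets[OF coord_meas, of "{C}" n] by simp
  next
    case False
    then have "(\<lambda>y. y n) -` {C} \<inter> space OS = {}" using space_OS unfolding odometer_def by auto
    then show ?thesis by simp
  qed
  moreover have "(\<lambda>y. y n) -` {C} \<inter> space OS = cyl n C" unfolding cyl_def space_OS by auto
  ultimately show ?thesis by simp
qed

lemma ODO_cyl: "ODO = cyl 0 UNIV"
  unfolding cyl_def using quot0 unfolding odometer_def by auto

lemma sets_OS_EE: "sets OS = sigma_sets ODO EE"
proof
  show "sigma_sets ODO EE \<subseteq> sets OS"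
  proof (rule sets.sigma_sets_subset')
    show "EE \<subseteq> sets OS" unfolding EE_def using cyl_sets by auto
    show "ODO \<in> sets OS" using sets.top[of OS] space_OS by simp
  qed
next
  let ?M = "\<lambda>n. count_space (quot (\<Gamma> n))"
  let ?\<Omega> = "\<Pi>\<^sub>E n\<in>UNIV. space (?M n)"
  have ind: "ODO \<inter> B \<in> sigma_sets ODO EE" if "B \<in> sigma_sets ?\<Omega> {{f \<in> ?\<Omega>. f n \<in> X} | n X. n \<in> UNIV \<and> X \<in> sets (?M n)}" for B
    using that
  proof (induction rule: sigma_sets.induct)
    case (Basic a)
    then obtain n X where a: "a = {f \<in> ?\<Omega>. f n \<in> X}" "X \<subseteq> quot (\<Gamma> n)" by auto
    have "ODO \<inter> a = \<Union> (cyl n ` X)" using a ODO_PiE unfolding cyl_def by auto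
    moreover have "countable (cyl n ` X)" using a(2) quot_fin by (meson countable_finite finite_imageI finite_subset)
    moreover have "b \<in> sigma_sets ODO EE" if "b \<in> cyl n ` X" for b
      using that a(2) unfolding EE_def by auto
    ultimately show ?case by (metis sigma_sets_UNION)
  next
    case Empty then show ?case by (simp add: sigma_sets.Empty)
  next
    case (Compl a)
    have "ODO \<inter> (?\<Omega> - a) = ODO - (ODO \<inter> a)" using ODO_PiE by auto
    then show ?case using Compl by (simp add: sigma_sets.Compl)
  next
    case (Union a)
    have "ODO \<inter> (\<Union>i. a i) = (\<Union>i. ODO \<inter> a i)" by auto
    moreover have "(\<Union>i. ODO \<inter> a i) \<in> sigma_sets ODO EE" by (rule sigma_sets.Union) (rule Union.IH)
    ultimately show ?case by simp
  qed
  show "sets OS \<subseteq> sigma_sets ODO EE"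
  proof
    fix S assume "S \<in> sets OS"
    then obtain B where B: "B \<in> sets (Pi\<^sub>M UNIV ?M)" "S = ODO \<inter> B"
      unfolding odometer_space_def sets_restrict_space by auto
    then show "S \<in> sigma_sets ODO EE" using ind unfolding sets_PiM_single by auto
  qed
qed

lemma odo_act_odo: assumes "y \<in> ODO" shows "odo_act g y \<in> ODO"
  unfolding odometer_def odo_act_def
proof (intro CollectI conjI allI)
  fix n
  from assms have "y n \<in> quot (\<Gamma> n)" unfolding odometer_def by auto
  then obtain a where "y n = lcoset a (\<Gamma> n)" unfolding quot_def by auto
  then show "lcoset g (y n) \<in> quot (\<Gamma> n)" unfolding quot_def by (auto simp: lcoset_lcoset)
  show "lcoset g (y (Suc n)) \<subseteq> lcoset g (y n)" apply (rule lcoset_mono) using assms unfolding odometer_def by auto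
qed

lemma odo_act_meas: "odo_act g \<in> measurable OS OS"
proof -
  have "(\<lambda>y n. lcoset g (y n)) \<in> measurable OS (Pi\<^sub>M UNIV (\<lambda>n. count_space (quot (\<Gamma> n))))"
  proof (rule measurable_PiM_single')
    fix n
    have "(\<lambda>C. lcoset g C) \<in> measurable (count_space (quot (\<Gamma> n))) (count_space (quot (\<Gamma> n)))"
      by (auto simp: quot_def lcoset_lcoset)
    then show "(\<lambda>y. lcoset g (y n)) \<in> measurable OS (count_space (quot (\<Gamma> n)))"
      using measurable_compose[OF coord_meas] by blast
  next
    show "(\<lambda>y n. lcoset g (y n)) \<in> space OS \<rightarrow> (\<Pi>\<^sub>E n\<in>UNIV. space (count_space (quot (\<Gamma> n))))"
      using odo_act_odo ODO_PiE space_OS unfolding odo_act_def by auto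
  qed
  then show ?thesis unfolding odo_act_def odometer_space_def
    by (intro measurable_restrict_space2) (use odo_act_odo space_OS in \<open>auto simp: odo_act_def odometer_space_def\<close>)
qed

lemma cyl_measure:
  assumes sets: "sets \<nu> = sets OS" and sp: "space \<nu> = ODO" and inv: "invariant_prob odo_act \<nu>"
    and C: "C \<in> quot (\<Gamma> n)"
  shows "of_nat (card (quot (\<Gamma> n))) * emeasure \<nu> (cyl n C) = 1"
proof -
  have prob: "prob_space \<nu>" using inv unfolding invariant_prob_def by blast
  have eq: "emeasure \<nu> (cyl n C') = emeasure \<nu> (cyl n C)" if C': "C' \<in> quot (\<Gamma> n)" for C'
  proof -
    obtain a where a: "C = lcoset a (\<Gamma> n)" using C unfolding quot_def by auto
    obtain b where b: "C' = lcoset b (\<Gamma> n)" using C' unfolding quot_def by auto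
    define g where "g = b + -a"
    have "lcoset g C = C'" by (simp add: a b g_def lcoset_lcoset add.assoc)
    have "odo_act g -` (cyl n C') \<inter> space \<nu> = cyl n C"
    proof (intro set_eqI iffI)
      fix y assume y: "y \<in> odo_act g -` (cyl n C') \<inter> space \<nu>"
      then have "lcoset g (y n) = lcoset g C" using \<open>lcoset g C = C'\<close> unfolding cyl_def odo_act_def by auto
      then have "y n = C" by (rule lcoset_inj)
      then show "y \<in> cyl n C" using y sp unfolding cyl_def by auto
    next
      fix y assume y: "y \<in> cyl n C"
      then show "y \<in> odo_act g -` (cyl n C') \<inter> space \<nu>" using \<open>lcoset g C = C'\<close> odo_act_odo sp
        unfolding cyl_def by (auto simp: odo_act_def)
    qed
    moreover have "cyl n C' \<in> sets \<nu>" using sets cyl_sets by simp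
    ultimately show ?thesis using inv unfolding invariant_prob_def by metis
  qed
  have "1 = emeasure \<nu> (space \<nu>)" using prob prob_space.emeasure_space_1 by metis
  also have "space \<nu> = (\<Union>C'\<in>quot (\<Gamma> n). cyl n C')" unfolding sp cyl_def odometer_def by auto
  also have "emeasure \<nu> (\<Union>C'\<in>quot (\<Gamma> n). cyl n C') = (\<Sum>C'\<in>quot (\<Gamma> n). emeasure \<nu> (cyl n C'))"
  proof (rule sum_emeasure[symmetric])
    show "cyl n ` quot (\<Gamma> n) \<subseteq> sets \<nu>" using sets cyl_sets by auto
    show "disjoint_family_on (cyl n) (quot (\<Gamma> n))" unfolding disjoint_family_on_def cyl_def by auto
    show "finite (quot (\<Gamma> n))" by (rule quot_fin)
  qed
  also have "\<dots> = (\<Sum>C'\<in>quot (\<Gamma> n). emeasure \<nu> (cyl n C))" using eq by simp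
  also have "\<dots> = of_nat (card (quot (\<Gamma> n))) * emeasure \<nu> (cyl n C)" by simp
  finally show ?thesis by simp
qed

lemma odo_unique:
  assumes "sets \<nu> = sets OS" "space \<nu> = ODO" "invariant_prob odo_act \<nu>"
    and "sets \<nu>' = sets OS" "space \<nu>' = ODO" "invariant_prob odo_act \<nu>'"
  shows "\<nu> = \<nu>'"
proof (rule measure_eqI_generator_eq[OF EE_stable EE_Pow])
  show "sets \<nu> = sigma_sets ODO EE" using assms(1) sets_OS_EE by simp
  show "sets \<nu>' = sigma_sets ODO EE" using assms(4) sets_OS_EE by simp
  show "emeasure \<nu> X = emeasure \<nu>' X" if X: "X \<in> EE" for X
  proof (cases "X = {}")
    case True then show ?thesis by simp
  next
    case False
    then obtain n C where nC: "X = cyl n C" "C \<in> quot (\<Gamma> n)" using X unfolding EE_def by auto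
    have c1: "of_nat (card (quot (\<Gamma> n))) * emeasure \<nu> (cyl n C) = 1" using cyl_measure assms(1-3) nC by blast
    have c2: "of_nat (card (quot (\<Gamma> n))) * emeasure \<nu>' (cyl n C) = 1" using cyl_measure assms(4-6) nC by blast
    have "card (quot (\<Gamma> n)) \<noteq> 0" using nC quot_fin by auto
    moreover have "of_nat (card (quot (\<Gamma> n))) * emeasure \<nu> (cyl n C) = of_nat (card (quot (\<Gamma> n))) * emeasure \<nu>' (cyl n C)"
      using c1 c2 by simp
    ultimately have "emeasure \<nu> (cyl n C) = emeasure \<nu>' (cyl n C)"
      using ennreal_mult_cancel_left[of "of_nat (card (quot (\<Gamma> n)))" "emeasure \<nu> (cyl n C)" "emeasure \<nu>' (cyl n C)"]
      by simp
    then show ?thesis using nC by simp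
  qed
  have "cyl 0 UNIV \<in> EE" using quot0 unfolding EE_def by blast
  then show "range (\<lambda>_. ODO) \<subseteq> EE" using ODO_cyl by auto
  show "(\<Union>i::nat. ODO) = ODO" by simp
  show "emeasure \<nu> ODO \<noteq> \<infinity>" for i :: nat
  proof -
    have "prob_space \<nu>" using assms(3) unfolding invariant_prob_def by blast
    then have "emeasure \<nu> (space \<nu>) = 1" by (rule prob_space.emeasure_space_1)
    then show ?thesis using assms(2) by simp
  qed
qed

end

lemma per_borel: "{x::'g::{countable,group_add} \<Rightarrow> nat. \<forall>a\<in>{1..r}. \<forall>g. (g \<in> Per x H a \<longleftrightarrow> g \<in> S a)} \<in> sets borel"
  unfolding Per_def by measurable

lemma eq_set_meas:
  assumes F: "F \<in> measurable M (count_space Q)" and G: "G \<in> measurable M (count_space Q)" and Q: "finite Q"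
  shows "{y \<in> space M. F y = G y} \<in> sets M"
proof -
  have "{y \<in> space M. F y = G y} = (\<Union>C\<in>Q. (F -` {C} \<inter> space M) \<inter> (G -` {C} \<inter> space M))"
  proof (intro set_eqI iffI)
    fix y assume y: "y \<in> {y \<in> space M. F y = G y}"
    then have "y \<in> space M" by simp
    then have "F y \<in> Q" using measurable_space[OF F] by force
    then show "y \<in> (\<Union>C\<in>Q. (F -` {C} \<inter> space M) \<inter> (G -` {C} \<inter> space M))" using y by auto
  qed auto
  also have "\<dots> \<in> sets M"
    using Q measurable_sets[OF F] measurable_sets[OF G] by (intro sets.finite_UN) auto
  finally show ?thesis .
qed

lemma all_set_meas:
  assumes "\<And>n::nat. {y \<in> space M. P n y} \<in> sets M"
  shows "{y \<in> space M. \<forall>n. P n y} \<in> sets M"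
proof -
  have "{y \<in> space M. \<forall>n. P n y} = space M - (\<Union>n. space M - {y \<in> space M. P n y})" by auto
  also have "\<dots> \<in> sets M" using assms by auto
  finally show ?thesis .
qed

locale TSm = TSi +
  fixes \<mu>
  assumes sets_mu: "sets \<mu> = sets (restrict_space borel (Xsh r \<Gamma> D))"
    and space_mu: "space \<mu> = Xsh r \<Gamma> D"
    and inv_mu: "invariant_prob shift \<mu>"
    and A1: "emeasure \<mu> AA = 1"
begin

abbreviation XX where "XX \<equiv> Xsh r \<Gamma> D"

lemma prob_mu: "prob_space \<mu>" using inv_mu unfolding invariant_prob_def by blast

lemma A_sets: "AA \<in> sets \<mu>" using A1 emeasure_notin_sets by force

lemma A_sub: "AA \<subseteq> XX" using sets.sets_into_space[OF A_sets] space_mu by simp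

lemma X_borel: "XX \<in> sets borel" unfolding Xsh_def by (rule borel_closed) simp

lemma A_borel: "AA \<in> sets borel"
proof -
  have "AA \<in> sets (restrict_space borel XX)" using A_sets sets_mu by simp
  then show ?thesis using X_borel by (simp add: sets_restrict_space_iff)
qed

lemma A_int: "AA \<inter> space \<mu> = AA" using A_sub space_mu by auto

lemma space_rA: "space (restrict_space \<mu> AA) = AA"
  by (simp add: space_restrict_space A_int)

lemma sets_rA: "S \<in> sets (restrict_space \<mu> AA) \<Longrightarrow> S \<in> sets \<mu>"
  using A_int A_sets by (simp add: sets_restrict_space_iff)

lemma borel_rA: assumes "B \<in> sets borel" shows "AA \<inter> B \<in> sets (restrict_space \<mu> AA)"
proof -
  have "AA \<inter> B \<in> sets borel" using assms A_borel by auto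
  then have "AA \<inter> B \<in> sets (restrict_space borel XX)" using A_sub X_borel by (auto simp: sets_restrict_space_iff)
  then have "AA \<inter> B \<in> sets \<mu>" using sets_mu by simp
  then show ?thesis using A_int A_sets by (simp add: sets_restrict_space_iff)
qed

lemma skel_borel: "{x. skel x n w} \<in> sets borel"
proof -
  have "{x. skel x n w} = {x. \<forall>a\<in>{1..r}. \<forall>g. (g \<in> Per x (\<Gamma> n) a \<longleftrightarrow> g \<in> lcoset (-w) (P n a))}"
    unfolding skel_def by (simp add: set_eq_iff)
  then show ?thesis using per_borel by simp
qed

lemma pi_coord_meas: "(\<lambda>x. pimap x n) \<in> measurable (restrict_space \<mu> AA) (count_space (quot (\<Gamma> n)))"
proof (subst measurable_count_space_eq2[OF quot_fin], intro conjI ballI)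
  show "(\<lambda>x. pimap x n) \<in> space (restrict_space \<mu> AA) \<rightarrow> quot (\<Gamma> n)"
    using pi_odo space_rA unfolding odometer_def by auto
  fix C assume C: "C \<in> quot (\<Gamma> n)"
  show "(\<lambda>x. pimap x n) -` {C} \<inter> space (restrict_space \<mu> AA) \<in> sets (restrict_space \<mu> AA)"
  proof (cases "n = 0")
    case True
    then have "(\<lambda>x. pimap x n) -` {C} \<inter> space (restrict_space \<mu> AA) = space (restrict_space \<mu> AA)"
      using C quot0 by (auto simp: pimap_def)
    then show ?thesis by simp
  next
    case False
    obtain a where a: "C = lcoset a (\<Gamma> n)" using C unfolding quot_def by auto
    have "(\<lambda>x. pimap x n) -` {C} \<inter> space (restrict_space \<mu> AA) = AA \<inter> {x. skel x n (-a)}"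
    proof (intro set_eqI iffI)
      fix x assume x: "x \<in> (\<lambda>x. pimap x n) -` {C} \<inter> space (restrict_space \<mu> AA)"
      then have xA: "x \<in> AA" using space_rA by auto
      obtain v where v: "skel x n v" using A_skel[OF xA, of n] False by auto
      have "lcoset (-v) (\<Gamma> n) = lcoset (-(-a)) (\<Gamma> n)" using pi_eq[OF xA _ v] False x a by auto
      then have "skel x n (-a)" by (rule skel_coset[OF v])
      then show "x \<in> AA \<inter> {x. skel x n (-a)}" using xA by auto
    next
      fix x assume x: "x \<in> AA \<inter> {x. skel x n (-a)}"
      then have "pimap x n = lcoset (-(-a)) (\<Gamma> n)" using pi_eq False by auto
      then show "x \<in> (\<lambda>x. pimap x n) -` {C} \<inter> space (restrict_space \<mu> AA)" using x a space_rA by auto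
    qed
    then show ?thesis using borel_rA[OF skel_borel] by simp
  qed
qed

lemma pi_meas: "pimap \<in> measurable (restrict_space \<mu> AA) OS"
proof -
  have "(\<lambda>x n. pimap x n) \<in> measurable (restrict_space \<mu> AA) (Pi\<^sub>M UNIV (\<lambda>n. count_space (quot (\<Gamma> n))))"
  proof (rule measurable_PiM_single')
    show "\<And>n. n \<in> UNIV \<Longrightarrow> (\<lambda>x. pimap x n) \<in> measurable (restrict_space \<mu> AA) (count_space (quot (\<Gamma> n)))"
      by (rule pi_coord_meas)
    show "(\<lambda>x n. pimap x n) \<in> space (restrict_space \<mu> AA) \<rightarrow> (\<Pi>\<^sub>E n\<in>UNIV. space (count_space (quot (\<Gamma> n))))"
      using pi_odo space_rA ODO_PiE by auto
  qed
  then show ?thesis unfolding odometer_space_def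
    by (intro measurable_restrict_space2) (use pi_odo space_rA in auto)
qed

lemma fval_meas: "(\<lambda>y. fval m (y m) h) \<in> measurable OS (count_space UNIV)"
proof -
  have "(\<lambda>C. fval m C h) \<in> measurable (count_space (quot (\<Gamma> m))) (count_space UNIV)" by simp
  then show ?thesis using measurable_compose[OF coord_meas] by blast
qed

lemma psi_meas: "psi \<in> borel_measurable OS"
proof (rule measurable_coordinatewise_then_product)
  fix h
  have "(\<lambda>y. psi y h) \<in> measurable OS (count_space UNIV)"
    unfolding psi_def by (rule evl_meas) (rule fval_meas)
  then show "(\<lambda>y. psi y h) \<in> borel_measurable OS"
    using measurable_cong_sets[OF refl sets_borel_eq_count_space] by blast
qed

definition nu0 where "nu0 = distr (restrict_space \<mu> AA) OS pimap"

lemma prob_rA: "prob_space (restrict_space \<mu> AA)"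
proof
  show "emeasure (restrict_space \<mu> AA) (space (restrict_space \<mu> AA)) = 1"
    using A1 A_int A_sets by (simp add: space_rA emeasure_restrict_space)
qed

lemma nu0_sets: "sets nu0 = sets OS" unfolding nu0_def by simp
lemma nu0_space: "space nu0 = ODO" unfolding nu0_def by (simp add: space_OS)

lemma emeasure_nu0: "B \<in> sets OS \<Longrightarrow> emeasure nu0 B = emeasure \<mu> (pimap -` B \<inter> AA)"
  unfolding nu0_def
  by (simp add: emeasure_distr[OF pi_meas] space_rA emeasure_restrict_space A_int A_sets)

lemma preA_sets: "B \<in> sets OS \<Longrightarrow> pimap -` B \<inter> AA \<in> sets \<mu>"
  using measurable_sets[OF pi_meas] space_rA sets_rA by metis

lemma nu0_inv: "invariant_prob odo_act nu0"
  unfolding invariant_prob_def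
proof (intro conjI allI ballI)
  show "prob_space nu0" unfolding nu0_def by (rule prob_space.prob_space_distr[OF prob_rA pi_meas])
  fix g
  show "odo_act g \<in> measurable nu0 nu0"
    using odo_act_meas measurable_cong_sets[OF nu0_sets nu0_sets] by blast
  fix B assume B: "B \<in> sets nu0"
  then have B': "B \<in> sets OS" using nu0_sets by simp
  have pre: "odo_act g -` B \<inter> space nu0 \<in> sets OS"
    using measurable_sets[OF odo_act_meas B'] space_OS nu0_space by simp
  have eqs: "pimap -` (odo_act g -` B \<inter> space nu0) \<inter> AA = shift g -` (pimap -` B \<inter> AA) \<inter> space \<mu>"
  proof (intro set_eqI iffI)
    fix x assume x: "x \<in> pimap -` (odo_act g -` B \<inter> space nu0) \<inter> AA"
    then have xA: "x \<in> AA" by auto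
    then show "x \<in> shift g -` (pimap -` B \<inter> AA) \<inter> space \<mu>"
      using x A_shift[OF xA, of g] pi_shift[OF xA, of g] A_int by auto
  next
    fix x assume x: "x \<in> shift g -` (pimap -` B \<inter> AA) \<inter> space \<mu>"
    then have sA: "shift g x \<in> AA" by auto
    have xA: "x \<in> AA" using A_shift[OF sA, of "-g"] by (simp add: shift_shift shift_0)
    then show "x \<in> pimap -` (odo_act g -` B \<inter> space nu0) \<inter> AA"
      using x pi_shift[OF xA, of g] pi_odo[OF xA] nu0_space by auto
  qed
  have "emeasure nu0 (odo_act g -` B \<inter> space nu0) = emeasure \<mu> (shift g -` (pimap -` B \<inter> AA) \<inter> space \<mu>)"
    using emeasure_nu0[OF pre] eqs by simp
  also have "\<dots> = emeasure \<mu> (pimap -` B \<inter> AA)"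
    using inv_mu preA_sets[OF B'] unfolding invariant_prob_def by blast
  also have "\<dots> = emeasure nu0 B" using emeasure_nu0[OF B'] by simp
  finally show "emeasure nu0 (odo_act g -` B \<inter> space nu0) = emeasure nu0 B" .
qed

abbreviation Y0 where "Y0 \<equiv> pimap ` AA"

lemma Y0_sets: "Y0 \<in> sets OS"
proof -
  define W where "W = psi -` AA \<inter> ODO"
  have W: "W \<in> sets OS" using measurable_sets[OF psi_meas A_borel] space_OS unfolding W_def by simp
  have spW: "space (restrict_space OS W) = W" using W space_OS unfolding W_def by (auto simp: space_restrict_space)
  have psiW: "psi \<in> measurable (restrict_space OS W) (restrict_space \<mu> AA)"
  proof (rule measurable_restrict_space2)
    show "psi \<in> space (restrict_space OS W) \<rightarrow> AA" using spW unfolding W_def by auto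
    have "psi \<in> measurable (restrict_space OS W) (restrict_space borel XX)"
      by (rule measurable_restrict_space3[OF psi_meas]) (use A_sub in \<open>auto simp: W_def\<close>)
    then show "psi \<in> measurable (restrict_space OS W) \<mu>"
      using measurable_cong_sets[OF refl sets_mu] by blast
  qed
  have comp: "(\<lambda>y. pimap (psi y)) \<in> measurable (restrict_space OS W) OS"
    by (rule measurable_compose[OF psiW pi_meas])
  have "{y \<in> space (restrict_space OS W). \<forall>n. pimap (psi y) n = y n} \<in> sets (restrict_space OS W)"
  proof (rule all_set_meas)
    fix n
    show "{y \<in> space (restrict_space OS W). pimap (psi y) n = y n} \<in> sets (restrict_space OS W)"
    proof (rule eq_set_meas[OF _ _ quot_fin])
      show "(\<lambda>y. pimap (psi y) n) \<in> measurable (restrict_space OS W) (count_space (quot (\<Gamma> n)))"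
        using measurable_compose[OF comp coord_meas] by blast
      show "(\<lambda>y. y n) \<in> measurable (restrict_space OS W) (count_space (quot (\<Gamma> n)))"
        by (rule measurable_restrict_space1[OF coord_meas])
    qed
  qed
  moreover have "{y \<in> space (restrict_space OS W). \<forall>n. pimap (psi y) n = y n} = Y0"
  proof (intro set_eqI iffI)
    fix y assume y: "y \<in> {y \<in> space (restrict_space OS W). \<forall>n. pimap (psi y) n = y n}"
    then have "pimap (psi y) = y" "psi y \<in> AA" using spW unfolding W_def by auto
    then show "y \<in> Y0" by (metis image_eqI)
  next
    fix y assume "y \<in> Y0"
    then obtain x where x: "x \<in> AA" "y = pimap x" by auto
    then show "y \<in> {y \<in> space (restrict_space OS W). \<forall>n. pimap (psi y) n = y n}"
      using spW psi_pi[OF x(1)] pi_odo[OF x(1)] unfolding W_def by auto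
  qed
  ultimately have "Y0 \<in> sets (restrict_space OS W)" by simp
  moreover have WS: "W \<inter> space OS \<in> sets OS" using W by auto
  ultimately show ?thesis using sets_restrict_space_iff[OF WS] by blast
qed

lemma main:
  "(\<exists>\<nu>. sets \<nu> = sets OS \<and> space \<nu> = ODO \<and> invariant_prob odo_act \<nu>)
    \<and> (\<forall>\<nu>. sets \<nu> = sets OS \<and> space \<nu> = ODO \<and> invariant_prob odo_act \<nu>
           \<longrightarrow> meas_conj shift \<mu> odo_act \<nu>)"
proof (intro conjI allI impI)
  show "\<exists>\<nu>. sets \<nu> = sets OS \<and> space \<nu> = ODO \<and> invariant_prob odo_act \<nu>"
    using nu0_sets nu0_space nu0_inv by blast
  fix \<nu> assume H: "sets \<nu> = sets OS \<and> space \<nu> = ODO \<and> invariant_prob odo_act \<nu>"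
  have nu: "\<nu> = nu0" by (rule odo_unique) (use H nu0_sets nu0_space nu0_inv in auto)
  show "meas_conj shift \<mu> odo_act \<nu>"
    unfolding meas_conj_def nu
  proof (intro exI conjI)
    show "AA \<in> sets \<mu>" by (rule A_sets)
    show "Y0 \<in> sets nu0" using Y0_sets nu0_sets by simp
    have "emeasure \<mu> (space \<mu> - AA) = emeasure \<mu> (space \<mu>) - emeasure \<mu> AA"
      by (rule emeasure_compl[OF A_sets]) (simp add: A1)
    then show "emeasure \<mu> (space \<mu> - AA) = 0"
      using A1 prob_space.emeasure_space_1[OF prob_mu] by simp
    have "space OS - Y0 \<in> sets OS" by (rule sets.compl_sets[OF Y0_sets])
    then have "ODO - Y0 \<in> sets OS" by (simp add: space_OS)
    moreover have "pimap -` (ODO - Y0) \<inter> AA = {}" by blast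
    ultimately show "emeasure nu0 (space nu0 - Y0) = 0"
      using emeasure_nu0 nu0_space by simp
    show "\<forall>g. \<forall>x\<in>AA. shift g x \<in> AA" using A_shift by blast
    show "\<forall>g. \<forall>y\<in>Y0. odo_act g y \<in> Y0"
    proof (intro allI ballI)
      fix g y assume "y \<in> Y0"
      then obtain x where x: "x \<in> AA" "y = pimap x" by auto
      then have "odo_act g y = pimap (shift g x)" using pi_shift by simp
      then show "odo_act g y \<in> Y0" using A_shift[OF x(1)] by simp
    qed
    show "bij_betw pimap AA Y0" using pi_inj by (simp add: bij_betw_def)
    show "pimap \<in> measurable (restrict_space \<mu> AA) (restrict_space nu0 Y0)"
      by (rule measurable_restrict_space2) (use space_rA pi_meas measurable_cong_sets[OF refl nu0_sets] in auto)
    have psim: "psi \<in> measurable (restrict_space nu0 Y0) (restrict_space \<mu> AA)"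
    proof (rule measurable_restrict_space2)
      have sp: "space (restrict_space nu0 Y0) = Y0" using pi_odo nu0_space by (auto simp: space_restrict_space)
      show "psi \<in> space (restrict_space nu0 Y0) \<rightarrow> AA" using sp psi_pi by auto
      have "psi \<in> measurable (restrict_space OS Y0) (restrict_space borel XX)"
        by (rule measurable_restrict_space3[OF psi_meas]) (use A_sub psi_pi in auto)
      then show "psi \<in> measurable (restrict_space nu0 Y0) \<mu>"
        using measurable_cong_sets[OF sets_restrict_space_cong[OF nu0_sets] sets_mu] by blast
    qed
    have eqv: "\<And>y. y \<in> space (restrict_space nu0 Y0) \<Longrightarrow> psi y = the_inv_into AA pimap y"
    proof -
      fix y assume "y \<in> space (restrict_space nu0 Y0)"
      then obtain x where "x \<in> AA" "y = pimap x" by (auto simp: space_restrict_space)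
      then show "psi y = the_inv_into AA pimap y" using psi_pi the_inv_into_f_f[OF pi_inj] by simp
    qed
    show "the_inv_into AA pimap \<in> measurable (restrict_space nu0 Y0) (restrict_space \<mu> AA)"
      by (rule measurable_cong[THEN iffD1, OF _ psim]) (rule eqv)
    show "\<forall>g. \<forall>x\<in>AA. pimap (shift g x) = odo_act g (pimap x)" using pi_shift by blast
    show "\<forall>B\<in>sets nu0. B \<subseteq> Y0 \<longrightarrow> emeasure nu0 B = emeasure \<mu> (pimap -` B \<inter> AA)"
      using emeasure_nu0 nu0_sets by simp
  qed
qed

end

theorem proposition5p8:
  fixes r :: nat and \<Gamma> D :: "nat \<Rightarrow> 'g::{group_add,countable} set"
    and \<mu> :: "('g \<Rightarrow> nat) measure" and i :: nat
  assumes "toeplitz_setting r \<Gamma> D"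
    and "sets \<mu> = sets (restrict_space borel (Xsh r \<Gamma> D))"
    and "space \<mu> = Xsh r \<Gamma> D"
    and "invariant_prob shift \<mu>"
    and "1 \<le> i" and "i \<le> r"
    and "emeasure \<mu> (A r \<Gamma> D i) = 1"
  shows "(\<exists>\<nu>. sets \<nu> = sets (odometer_space \<Gamma>) \<and> space \<nu> = odometer \<Gamma> \<and> invariant_prob odo_act \<nu>)
    \<and> (\<forall>\<nu>. sets \<nu> = sets (odometer_space \<Gamma>) \<and> space \<nu> = odometer \<Gamma> \<and> invariant_prob odo_act \<nu>
           \<longrightarrow> meas_conj shift \<mu> odo_act \<nu>)"
proof -
  interpret TSm r \<Gamma> D i \<mu>
    by unfold_locales (fact assms)+
  show ?thesis by (rule main)
qed

end
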